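(* Let $p>3$ be a prime, $q=p^h$, and $a,b\in\mathbb{F}_{q^2}^*$. Then $\deg\gcd\bigl(N_{a,b}(X),D_{a,b}(X)\bigr)=2$ if and only if $b=v/a^2$ for some $v\in\mathbb{F}_q^*$ satisfying $v^2-a^{q+1}v-a^{3q+3}=0$. In this case the common factor is (up to a scalar) $bX^2-a^qX-a^{q+1}+b^{q+1}$.
   Context: $N_{a,b}(X)=a^qX^3+X^2+b^q$ and $D_{a,b}(X)=bX^3+X+a$, polynomials in $\mathbb{F}_{q^2}[X]$; gcd means the monic greatest common divisor in $\mathbb{F}_{q^2}[X]$. *)

theory Defs
  imports "HOL-Computational_Algebra.Computational_Algebra" "HOL-Library.Cardinality"
begin

definition Npoly :: "nat \<Rightarrow> 'a::field \<Rightarrow> 'a \<Rightarrow> 'a poly" where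
  "Npoly q a b = [: b ^ q, 0, 1, a ^ q :]"

definition Dpoly :: "'a::field \<Rightarrow> 'a \<Rightarrow> 'a poly" where
  "Dpoly a b = [: a, 1, 0, b :]"

end

theory Submission imports Defs begin

lemma keyalg:
  fixes a b A B :: "'a::field"
  assumes "a \<noteq> 0" "b \<noteq> 0" "A \<noteq> 0"
  shows "(1 - B*b + A*a + A^2/b = 0 \<and> a - (B*b - A*a)*A/b = 0) \<longleftrightarrow>
         (A^2*B = a^2*b \<and> a*b^2 - A*b - A^3 = 0)"
proof -
  have e1: "1 - B*b + A*a + A^2/b = 0 \<longleftrightarrow> b - B*b^2 + A*a*b + A^2 = 0"
    using assms by (auto simp: field_simps power2_eq_square)
  have e2: "a - (B*b - A*a)*A/b = 0 \<longleftrightarrow> a*b = (B*b - A*a)*A"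
    using assms by (auto simp: field_simps)
  show ?thesis unfolding e1 e2
  proof
    assume h: "b - B*b^2 + A*a*b + A^2 = 0 \<and> a*b = (B*b - A*a)*A"
    have hb: "A*B*b = a*b + A^2*a" using h by (simp add: algebra_simps power2_eq_square)
    have "A*(a*b^2) = A*(A*b + A^3)"
    proof -
      have "A*(b - B*b^2 + A*a*b + A^2) = 0" using h by simp
      hence "A*b - (A*B*b)*b + A^2*a*b + A^3 = 0" by (simp add: algebra_simps power2_eq_square power3_eq_cube)
      hence "A*b - (a*b + A^2*a)*b + A^2*a*b + A^3 = 0" by (simp add: hb)
      thus ?thesis by (simp add: algebra_simps power2_eq_square power3_eq_cube)
    qed
    hence "a*b^2 = A*b + A^3" using assms(3) mult_left_cancel by blast
    hence c1: "a*b^2 - A*b - A^3 = 0" by simp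
    have "A*(A^2*B) * b = A*(a^2*b) * b"
    proof -
      have "A*(A^2*B)*b = A^2*(A*B*b)" by (simp add: algebra_simps power2_eq_square)
      also have "\<dots> = A^2*(a*b + A^2*a)" by (simp add: hb)
      also have "\<dots> = a*A*(A*b + A^3)" by (simp add: algebra_simps power2_eq_square power3_eq_cube)
      also have "\<dots> = a*A*(a*b^2)" using c1 by (simp add: algebra_simps)
      finally show ?thesis by (simp add: algebra_simps power2_eq_square)
    qed
    hence "A^2*B = a^2*b" using assms by simp
    with c1 show "A^2*B = a^2*b \<and> a*b^2 - A*b - A^3 = 0" by simp
  next
    assume h: "A^2*B = a^2*b \<and> a*b^2 - A*b - A^3 = 0"
    have c1: "a*b^2 = A*b + A^3" using h by (simp add: algebra_simps)
    have "A^2 * (a*b) = A^2 * ((B*b - A*a)*A)"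
    proof -
      have "A^2 * ((B*b - A*a)*A) = A*(A^2*B)*b - A^4*a" by (simp add: algebra_simps power2_eq_square power4_eq_xxxx)
      also have "\<dots> = A*a*(a*b^2) - A^4*a" using h by (simp add: algebra_simps power2_eq_square)
      also have "\<dots> = A*a*(A*b + A^3) - A^4*a" by (simp add: c1)
      finally show ?thesis by (simp add: algebra_simps power2_eq_square power3_eq_cube power4_eq_xxxx)
    qed
    hence e: "a*b = (B*b - A*a)*A" using assms by simp
    have hb: "A*B*b = a*b + A^2*a" using e by (simp add: algebra_simps power2_eq_square)
    have "A * (b - B*b^2 + A*a*b + A^2) = 0"
    proof -
      have "A * (b - B*b^2 + A*a*b + A^2) = A*b - (A*B*b)*b + A^2*a*b + A^3"
        by (simp add: algebra_simps power2_eq_square power3_eq_cube)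
      also have "\<dots> = A*b - (a*b + A^2*a)*b + A^2*a*b + A^3" by (simp add: hb)
      also have "\<dots> = A*b + A^3 - a*b^2" by (simp add: algebra_simps power2_eq_square)
      also have "\<dots> = 0" by (simp add: c1)
      finally show ?thesis .
    qed
    hence "b - B*b^2 + A*a*b + A^2 = 0" using assms by simp
    with e show "b - B*b^2 + A*a*b + A^2 = 0 \<and> a*b = (B*b - A*a)*A" by simp
  qed
qed
theorem mainTheorem4:
  fixes p h q :: nat and a b :: "'a::{field_gcd, finite}"
  assumes "prime p" and "p > 3" and "h > 0" and "q = p ^ h"
    and "CARD('a) = q ^ 2"
    and "a \<noteq> 0" and "b \<noteq> 0"
  shows "(degree (gcd (Npoly q a b) (Dpoly a b)) = 2 \<longleftrightarrow>
           (\<exists>v. v \<noteq> 0 \<and> v ^ q = v \<and> b = v / a ^ 2 \<and>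
                v ^ 2 - a ^ (q + 1) * v - a ^ (3 * q + 3) = 0))
      \<and> (degree (gcd (Npoly q a b) (Dpoly a b)) = 2 \<longrightarrow>
           (\<exists>c. c \<noteq> 0 \<and> gcd (Npoly q a b) (Dpoly a b) =
                smult c [: b ^ (q + 1) - a ^ (q + 1), - (a ^ q), b :]))"
proof -
  note a0 = assms(6) and b0 = assms(7)
  define A where "A = a ^ q"
  define B where "B = b ^ q"
  have A0: "A \<noteq> 0" using a0 by (simp add: A_def)
  define N where "N = Npoly q a b"
  define D where "D = Dpoly a b"
  define F where "F = [: b ^ (q + 1) - a ^ (q + 1), - (a ^ q), b :]"
  define g where "g = gcd N D"
  have Fe: "F = [: B*b - A*a, -A, b:]" by (simp add: F_def A_def B_def algebra_simps)
  have Ne: "N = [:B, 0, 1, A:]" by (simp add: N_def Npoly_def A_def B_def)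
  have De: "D = [:a, 1, 0, b:]" by (simp add: D_def Dpoly_def)
  have hF: "smult b N = F + smult A D" by (simp add: Ne De Fe algebra_simps)
  have F0: "F \<noteq> 0" using b0 by (simp add: Fe)
  have degF: "degree F = 2" using b0 by (simp add: Fe)
  have D0: "D \<noteq> 0" by (simp add: De)
  have g0: "g \<noteq> 0" using D0 by (simp add: g_def)
  have gF: "g dvd F"
  proof -
    have "g dvd smult b N" unfolding g_def by (simp add: dvd_smult)
    moreover have "g dvd smult A D" unfolding g_def by (simp add: dvd_smult)
    ultimately have "g dvd smult b N - smult A D" by (rule dvd_diff)
    thus ?thesis using hF by simp
  qed
  have degle: "degree g \<le> 2" using dvd_imp_degree_le[OF gF F0] degF by simp
  have FD_iff: "F dvd D \<longleftrightarrow> degree g = 2"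
  proof
    assume FD: "F dvd D"
    have "F dvd smult b N" using hF FD by (simp add: dvd_smult)
    hence "F dvd N" using b0 by (rule dvd_smult_cancel)
    hence "F dvd g" unfolding g_def using FD by simp
    from dvd_imp_degree_le[OF this g0] degle degF show "degree g = 2" by simp
  next
    assume dg: "degree g = 2"
    from gF obtain k where k: "F = g * k" by (auto elim: dvdE)
    have k0: "k \<noteq> 0" using k F0 by auto
    have "degree k = 0" using degree_mult_eq[OF g0 k0] k dg degF by simp
    hence "is_unit k" using k0 by (simp add: is_unit_iff_degree)
    hence "F dvd g" using k by (simp add: mult_unit_dvd_iff)
    moreover have "g dvd D" by (simp add: g_def)
    ultimately show "F dvd D" by (rule dvd_trans)
  qed
  define r0 where "r0 = a - (B*b - A*a)*A/b"
  define r1 where "r1 = 1 - B*b + A*a + A^2/b"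
  define Q0 where "Q0 = [:A/b, 1:]"
  have DQ: "D = F * Q0 + [:r0, r1:]"
    using b0 by (simp add: De Fe Q0_def r0_def r1_def field_simps power2_eq_square)
  have FD_cond: "F dvd D \<longleftrightarrow> r1 = 0 \<and> r0 = 0"
  proof
    assume "F dvd D"
    then obtain Q where Q: "D = F * Q" by (auto elim: dvdE)
    have R: "F * (Q - Q0) = [:r0, r1:]" using Q DQ by (simp add: algebra_simps)
    show "r1 = 0 \<and> r0 = 0"
    proof (cases "Q = Q0")
      case True thus ?thesis using R by simp
    next
      case False
      hence "degree (F * (Q - Q0)) = 2 + degree (Q - Q0)" using degree_mult_eq[OF F0] degF by simp
      moreover have "degree [:r0, r1:] \<le> 1" by simp
      ultimately show ?thesis using R by simp
    qed
  next
    assume "r1 = 0 \<and> r0 = 0"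
    thus "F dvd D" using DQ by simp
  qed
  have cond_iff: "r1 = 0 \<and> r0 = 0 \<longleftrightarrow>
           (\<exists>v. v \<noteq> 0 \<and> v ^ q = v \<and> b = v / a ^ 2 \<and>
                v ^ 2 - a ^ (q + 1) * v - a ^ (3 * q + 3) = 0)"
  proof -
    have k: "r1 = 0 \<and> r0 = 0 \<longleftrightarrow> (A^2*B = a^2*b \<and> a*b^2 - A*b - A^3 = 0)"
      using keyalg[OF a0 b0 A0, of B] unfolding r0_def r1_def by blast
    have vq: "(a^2*b)^q = A^2*B"
      by (simp add: A_def B_def power_mult_distrib flip: power_mult) (simp add: mult.commute)
    have e: "(a^2*b)^2 - a^(q+1)*(a^2*b) - a^(3*q+3) = a^3 * (a*b^2 - A*b - A^3)"
      by (simp add: A_def algebra_simps power2_eq_square power3_eq_cube power_add power_mult flip: power_Suc)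
    show ?thesis
    proof
      assume "r1 = 0 \<and> r0 = 0"
      hence h: "A^2*B = a^2*b \<and> a*b^2 - A*b - A^3 = 0" using k by simp
      show "\<exists>v. v \<noteq> 0 \<and> v ^ q = v \<and> b = v / a ^ 2 \<and>
                v ^ 2 - a ^ (q + 1) * v - a ^ (3 * q + 3) = 0"
        by (rule exI[of _ "a^2*b"]) (use h a0 b0 vq e in auto)
    next
      assume "\<exists>v. v \<noteq> 0 \<and> v ^ q = v \<and> b = v / a ^ 2 \<and>
                v ^ 2 - a ^ (q + 1) * v - a ^ (3 * q + 3) = 0"
      then obtain v where v: "v ^ q = v" "b = v / a ^ 2" "v ^ 2 - a ^ (q + 1) * v - a ^ (3 * q + 3) = 0" by blast
      have ve: "v = a^2*b" using v(2) a0 by simp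
      have "A^2*B = a^2*b" using v(1) vq ve by simp
      moreover have "a^3 * (a*b^2 - A*b - A^3) = 0" using v(3) e ve by simp
      hence "a*b^2 - A*b - A^3 = 0" using a0 by simp
      ultimately show "r1 = 0 \<and> r0 = 0" using k by simp
    qed
  qed
  have part2: "degree g = 2 \<longrightarrow> (\<exists>c. c \<noteq> 0 \<and> g = smult c F)"
  proof
    assume dg: "degree g = 2"
    from gF obtain k where k: "F = g * k" by (auto elim: dvdE)
    have k0: "k \<noteq> 0" using k F0 by auto
    have "degree k = 0" using degree_mult_eq[OF g0 k0] k dg degF by simp
    then obtain c where c: "k = [:c:]" by (metis degree_eq_zeroE)
    have c0: "c \<noteq> 0" using c k0 by simp
    have "F = smult c g" using k c by simp
    hence "g = smult (inverse c) F" using c0 by simp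
    thus "\<exists>c. c \<noteq> 0 \<and> g = smult c F" using c0 by (intro exI[of _ "inverse c"]) simp
  qed
  show ?thesis using FD_iff FD_cond cond_iff part2 unfolding g_def N_def D_def F_def by blast
qed
end
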